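(* Let $\mathfrak R\subseteq\mathfrak R(d_*,L_*,s_* )$ be a cubical iterated graph system with replacement graphs $G_m$, and let $n\in\mathbb N$. For every $\tilde w\in W_\#$ there is a folding of $G_{n+|\tilde w|}$ onto $\tilde w\cdot W_n:=\{\tilde wu: u\in W_n\}$.
   Context: Graphs: $(V,E)$ with $V$ finite non-empty, $E\subseteq V\times V$, $(x,y)\in E\Rightarrow(y,x)\notin E$; $\{x,y\}\in E$ means either orientation. A mapping between graphs $\varphi:G\to G'$ is a map on vertices such that each edge $\{x,y\}$ has $\varphi(x)=\varphi(y)$ or $\{\varphi(x),\varphi(y)\}\in E(G')$. For $U\subseteq V(G)$, $\langle U\rangle$ is the induced subgraph; a folding of $G$ onto $U$ is a mapping between graphs $\varphi:G\to\langle U\rangle$ with $\varphi|_U=\mathrm{id}_U$. An iterated graph system (IGS) $\mathfrak R$ consists of a connected graph $G_1=(S,E)$, a finite set $\mathcal T$ of types, a surjective typing $\mathfrak t:E\to\mathcal T$ and non-empty gluing rules $I_t\subseteq S\times S$ ($t\in\mathcal T$). With $W_m=S^m$, $W_\#=\bigcup_{m\ge1}W_m$ and $[w]_k=w_1\cdots w_k$, the replacement graphs $G_m=(W_m,E_m)$ and their typings are defined recursively: $(w,v)\in E_{m+1}$ iff either (1) $[w]_m=[v]_m$ and $(w_{m+1},v_{m+1})\in E$ (type $\mathfrak t(w_{m+1},v_{m+1})$), or (2) $([w]_m,[v]_m)\in E_m$ and $(w_{m+1},v_{m+1})\in I_{\mathfrak t([w]_m,[v]_m)}$ (type $\mathfrak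 t([w]_m,[v]_m)$). A mapping of IGS $\varphi:\mathfrak R\to\mathfrak R'$ is a graph mapping $G_1\to G_1'$ such that (i) if $\varphi(w_1)=\varphi(v_1)$ for an edge $\{w_1,v_1\}$ of type $t$ then $\varphi(w_2)=\varphi(v_2)$ for all $(w_2,v_2)\in I_t$; (ii) if $(w_1,v_1)\in E$ has type $t$ and $(\varphi(w_1),\varphi(v_1))\in E'$ has type $t'$ then $(\varphi(w_2),\varphi(v_2))\in I'_{t'}$ for all $(w_2,v_2)\in I_t$; (iii) if $(w_1,v_1)\in E$ has type $t$ and $(\varphi(v_1),\varphi(w_1))\in E'$ has type $t'$ then $(\varphi(v_2),\varphi(w_2))\in I'_{t'}$ for all $(w_2,v_2)\in I_t$. An isomorphism of IGS is a graph isomorphism such that it and its inverse are mappings of IGS. $\mathfrak R$ is a sub-system of $\mathfrak R'$ ($\mathfrak R\subseteq\mathfrak R'$) if $S\subseteq S'$, $\mathcal T=\mathcal T'$ and the inclusion $S\to S'$ is a mapping of IGS. Cubical IGS: for integers $d_*\ge1$, $s_*\ge1$, $L_*\ge3$, let $\mathfrak R(d_*,L_*,s_* )$ have symbols $S(d_*,L_*,s_* )=\{1,\dots,L_*\}^{d_*}\times\{\underline1,\dots,\underline{s_*}\}$, coordinate functions $c_i(w)$ ($i=1,\dots,d_*$) and sheet $s(w)$; types $\{t_1,\dots,t_{d_*}\}$; $(w,v)$ is an edge of type $t_j$ iff $c_i(v)=c_i(w)$ for $i\neq j$ and $c_j(v)=c_j(w)+1$; $(w,v)\in I_{t_j}$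 iff $c_i(w)=c_i(v)$ for $i\ne j$, $(c_j(w),c_j(v))=(L_*,1)$ and $s(w)=s(v)$. Define maps on $S(d_*,L_*,s_* )$, all preserving the sheet $s$ and all coordinates other than those listed: $\eta_j$: $c_j\mapsto L_*+1-c_j$; for $j\neq k$, $\alpha^+_{j,k}$ swaps $c_j$ and $c_k$; $\alpha^-_{j,k}$ sets $c_k(\alpha(w))=L_*+1-c_j(w)$ and $c_j(\alpha(w))=L_*+1-c_k(w)$. Let $\mathcal G(d_*,L_*,s_* )$ be the set of all these maps. A cubical IGS is a sub-system $\mathfrak R\subseteq\mathfrak R(d_*,L_*,s_* )$ such that: (C1) for each $j$, every $w\in S(d_*,L_*,s_* )$ with $c_i(w)\in\{1,L_*\}$ for all $i\neq j$ and $s(w)=\underline1$ (call this condition $(\ast_j)$) lies in $S(\mathfrak R)$; (C2) if $w,v$ satisfy $(\ast_j)$ for the same $j$, $c_i(v)=c_i(w)$ for $i\neq j$ and $c_j(v)=c_j(w)+1$, then $(w,v)\in E(\mathfrak R)$; (C3) if $w,v$ satisfy $(\ast_j)$ for the same $j$, $c_i(w)=c_i(v)$ for $i\neq j$ and $(c_j(w),c_j(v))=(L_*,1)$, then $(w,v)\in I_{t_j}(\mathfrak R)$; (C4) for every $\alpha\in\mathcal G(d_*,L_*,s_* )$ the restriction $\alpha|_{S(\mathfrak R)}$ is an isomorphism of IGS $\mathfrak R\to\mathfrak R$. *)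

theory Defs
  imports Main
begin

text \<open>A graph is given by a vertex set V and an edge set E of ordered pairs;
  an unordered edge {x,y} means either orientation.\<close>

definition graph_mapping ::
  "'a set \<Rightarrow> ('a \<times> 'a) set \<Rightarrow> 'b set \<Rightarrow> ('b \<times> 'b) set \<Rightarrow> ('a \<Rightarrow> 'b) \<Rightarrow> bool" where
  "graph_mapping V E V' E' \<phi> \<longleftrightarrow>
     \<phi> ` V \<subseteq> V' \<and>
     (\<forall>(x,y)\<in>E. \<phi> x = \<phi> y \<or> (\<phi> x, \<phi> y) \<in> E' \<or> (\<phi> y, \<phi> x) \<in> E')"

definition folding ::
  "'a set \<Rightarrow> ('a \<times> 'a) set \<Rightarrow> 'a set \<Rightarrow> ('a \<Rightarrow> 'a) \<Rightarrow> bool" where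
  "folding V E U \<phi> \<longleftrightarrow>
     U \<subseteq> V \<and> graph_mapping V E U (E \<inter> (U \<times> U)) \<phi> \<and> (\<forall>x\<in>U. \<phi> x = x)"

record ('a, 't) igs =
  Sym  :: "'a set"
  Edg  :: "('a \<times> 'a) set"
  Typ  :: "'t set"
  Typing :: "'a \<times> 'a \<Rightarrow> 't"
  Glue :: "'t \<Rightarrow> ('a \<times> 'a) set"

definition igs_wf :: "('a, 't) igs \<Rightarrow> bool" where
  "igs_wf R \<longleftrightarrow>
     finite (Sym R) \<and> Sym R \<noteq> {} \<and>
     Edg R \<subseteq> Sym R \<times> Sym R \<and>
     (\<forall>(x,y)\<in>Edg R. (y,x) \<notin> Edg R) \<and>
     (\<forall>x\<in>Sym R. \<forall>y\<in>Sym R. (x,y) \<in> (Edg R \<union> (Edg R)\<inverse>)\<^sup>*) \<and>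
     finite (Typ R) \<and>
     Typing R ` Edg R = Typ R \<and>
     (\<forall>t\<in>Typ R. Glue R t \<noteq> {} \<and> Glue R t \<subseteq> Sym R \<times> Sym R)"

text \<open>Words: W_m = S^m as lists of length m; [w]_m = take m w; the (m+1)-st letter
  of a word of length m+1 is its last letter.
  gm_typ R m w v = Some t iff (w,v) is an edge of G_m of type t.\<close>

fun gm_typ :: "('a, 't) igs \<Rightarrow> nat \<Rightarrow> 'a list \<Rightarrow> 'a list \<Rightarrow> 't option" where
  "gm_typ R 0 w v = None"
| "gm_typ R (Suc m) w v =
     (if length w \<noteq> Suc m \<or> length v \<noteq> Suc m then None
      else if take m w = take m v \<and> (last w, last v) \<in> Edg R
        then Some (Typing R (last w, last v))
      else (case gm_typ R m (take m w) (take m v) of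
              None \<Rightarrow> None
            | Some t \<Rightarrow> if (last w, last v) \<in> Glue R t then Some t else None))"

definition words :: "('a, 't) igs \<Rightarrow> nat \<Rightarrow> 'a list set" where
  "words R m = {w. length w = m \<and> set w \<subseteq> Sym R}"

definition words_all :: "('a, 't) igs \<Rightarrow> 'a list set" where
  "words_all R = (\<Union>m\<in>{1..}. words R m)"

definition gm_edges :: "('a, 't) igs \<Rightarrow> nat \<Rightarrow> ('a list \<times> 'a list) set" where
  "gm_edges R m = {(w,v). gm_typ R m w v \<noteq> None}"

definition igs_mapping :: "('a, 't) igs \<Rightarrow> ('b, 's) igs \<Rightarrow> ('a \<Rightarrow> 'b) \<Rightarrow> bool" where
  "igs_mapping R R' \<phi> \<longleftrightarrow>
     graph_mapping (Sym R) (Edg R) (Sym R') (Edg R') \<phi> \<and>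
     (\<forall>(w1,v1)\<in>Edg R. \<phi> w1 = \<phi> v1 \<longrightarrow>
        (\<forall>(w2,v2)\<in>Glue R (Typing R (w1,v1)). \<phi> w2 = \<phi> v2)) \<and>
     (\<forall>(w1,v1)\<in>Edg R. (\<phi> w1, \<phi> v1) \<in> Edg R' \<longrightarrow>
        (\<forall>(w2,v2)\<in>Glue R (Typing R (w1,v1)).
           (\<phi> w2, \<phi> v2) \<in> Glue R' (Typing R' (\<phi> w1, \<phi> v1)))) \<and>
     (\<forall>(w1,v1)\<in>Edg R. (\<phi> v1, \<phi> w1) \<in> Edg R' \<longrightarrow>
        (\<forall>(w2,v2)\<in>Glue R (Typing R (w1,v1)).
           (\<phi> v2, \<phi> w2) \<in> Glue R' (Typing R' (\<phi> v1, \<phi> w1))))"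

definition igs_iso :: "('a, 't) igs \<Rightarrow> ('b, 's) igs \<Rightarrow> ('a \<Rightarrow> 'b) \<Rightarrow> bool" where
  "igs_iso R R' \<phi> \<longleftrightarrow>
     bij_betw \<phi> (Sym R) (Sym R') \<and> igs_mapping R R' \<phi> \<and>
     igs_mapping R' R (the_inv_into (Sym R) \<phi>)"

definition sub_system :: "('a, 't) igs \<Rightarrow> ('a, 't) igs \<Rightarrow> bool" where
  "sub_system R R' \<longleftrightarrow> Sym R \<subseteq> Sym R' \<and> Typ R = Typ R' \<and> igs_mapping R R' id"

text \<open>A symbol is a pair (c, s) with c a coordinate list of length d (c!(j-1) is the
  paper's c_j) with entries in {1..L}, and sheet s in {1..s_*}.
  The type t_j of the paper is represented by the number j-1 < d.\<close>

type_synonym csym = "nat list \<times> nat"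

definition cube_sym :: "nat \<Rightarrow> nat \<Rightarrow> nat \<Rightarrow> csym set" where
  "cube_sym d L s = {(c, \<sigma>). length c = d \<and> (\<forall>i<d. 1 \<le> c!i \<and> c!i \<le> L) \<and> 1 \<le> \<sigma> \<and> \<sigma> \<le> s}"

definition cube_igs :: "nat \<Rightarrow> nat \<Rightarrow> nat \<Rightarrow> (csym, nat) igs" where
  "cube_igs d L s =
    \<lparr> Sym = cube_sym d L s,
      Edg = {(w,v). w \<in> cube_sym d L s \<and> v \<in> cube_sym d L s \<and>
               (\<exists>j<d. (\<forall>i<d. i \<noteq> j \<longrightarrow> fst v ! i = fst w ! i) \<and> fst v ! j = fst w ! j + 1)},
      Typ = {..<d},
      Typing = (\<lambda>(w,v). THE j. j < d \<and> (\<forall>i<d. i \<noteq> j \<longrightarrow> fst v ! i = fst w ! i) \<and>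
                                 fst v ! j = fst w ! j + 1),
      Glue = (\<lambda>j. {(w,v). w \<in> cube_sym d L s \<and> v \<in> cube_sym d L s \<and>
               (\<forall>i<d. i \<noteq> j \<longrightarrow> fst w ! i = fst v ! i) \<and>
               fst w ! j = L \<and> fst v ! j = 1 \<and> snd w = snd v}) \<rparr>"

definition eta_map :: "nat \<Rightarrow> nat \<Rightarrow> csym \<Rightarrow> csym" where
  "eta_map L j = (\<lambda>(c, \<sigma>). (c[j := L + 1 - c!j], \<sigma>))"

definition alpha_plus :: "nat \<Rightarrow> nat \<Rightarrow> csym \<Rightarrow> csym" where
  "alpha_plus j k = (\<lambda>(c, \<sigma>). (c[j := c!k, k := c!j], \<sigma>))"

definition alpha_minus :: "nat \<Rightarrow> nat \<Rightarrow> nat \<Rightarrow> csym \<Rightarrow> csym" where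
  "alpha_minus L j k = (\<lambda>(c, \<sigma>). (c[k := L + 1 - c!j, j := L + 1 - c!k], \<sigma>))"

definition cube_group :: "nat \<Rightarrow> nat \<Rightarrow> (csym \<Rightarrow> csym) set" where
  "cube_group d L =
     {eta_map L j | j. j < d} \<union>
     {alpha_plus j k | j k. j < d \<and> k < d \<and> j \<noteq> k} \<union>
     {alpha_minus L j k | j k. j < d \<and> k < d \<and> j \<noteq> k}"

text \<open>Condition (*_j) (with j 0-based).\<close>

definition star_cond :: "nat \<Rightarrow> nat \<Rightarrow> nat \<Rightarrow> nat \<Rightarrow> csym \<Rightarrow> bool" where
  "star_cond d L s j w \<longleftrightarrow>
     w \<in> cube_sym d L s \<and> (\<forall>i<d. i \<noteq> j \<longrightarrow> fst w ! i \<in> {1, L}) \<and> snd w = 1"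

definition cubical_igs :: "nat \<Rightarrow> nat \<Rightarrow> nat \<Rightarrow> (csym, nat) igs \<Rightarrow> bool" where
  "cubical_igs d L s R \<longleftrightarrow>
     igs_wf R \<and> sub_system R (cube_igs d L s) \<and>
     (\<forall>j<d. \<forall>w. star_cond d L s j w \<longrightarrow> w \<in> Sym R) \<and>
     (\<forall>j<d. \<forall>w v. star_cond d L s j w \<and> star_cond d L s j v \<and>
        (\<forall>i<d. i \<noteq> j \<longrightarrow> fst v ! i = fst w ! i) \<and> fst v ! j = fst w ! j + 1
        \<longrightarrow> (w,v) \<in> Edg R) \<and>
     (\<forall>j<d. \<forall>w v. star_cond d L s j w \<and> star_cond d L s j v \<and>
        (\<forall>i<d. i \<noteq> j \<longrightarrow> fst w ! i = fst v ! i) \<and> fst w ! j = L \<and> fst v ! j = 1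
        \<longrightarrow> (w,v) \<in> Glue R j) \<and>
     (\<forall>\<alpha>\<in>cube_group d L. igs_iso R R \<alpha>)"

end

theory Submission
  imports Defs
begin


lemma wf_asym: "igs_wf R \<Longrightarrow> \<forall>(x,y)\<in>Edg R. (y,x) \<notin> Edg R"
  unfolding igs_wf_def by (elim conjE) assumption
lemma wf_irr: "igs_wf R \<Longrightarrow> \<forall>x. (x,x) \<notin> Edg R"
  using wf_asym by fast

lemma gm_typ_irrefl:
  assumes "\<forall>x. (x,x) \<notin> Edg R"
  shows "gm_typ R k z z = None"
  using assms by (induction k arbitrary: z) auto

lemma gm_typ_append:
  assumes irr: "\<forall>x. (x,x) \<notin> Edg R" and lw: "length w = m"
  shows "gm_typ R (m+n) (w@x) (w@y) = gm_typ R n x y"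
proof (induction n arbitrary: x y)
  case 0
  show ?case
  proof (cases m)
    case 0 then show ?thesis by simp
  next
    case (Suc m')
    show ?thesis
    proof (cases "x = [] \<and> y = []")
      case True then show ?thesis using gm_typ_irrefl[OF irr] by simp
    next
      case False then show ?thesis using Suc lw by auto
    qed
  qed
next
  case (Suc n)
  show ?case
  proof (cases "length x = Suc n \<and> length y = Suc n")
    case False then show ?thesis using lw by auto
  next
    case True
    then have ne: "x \<noteq> []" "y \<noteq> []" by auto
    have tk: "take (m+n) (w@x) = w @ take n x" "take (m+n) (w@y) = w @ take n y" using lw by auto
    have "(w @ take n x = w @ take n y) = (take n x = take n y)" by simp
    show ?thesis using True ne lw Suc.IH[of "take n x" "take n y"]
      by (simp only: add_Suc_right gm_typ.simps tk length_append last_append if_False) simp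
  qed
qed


lemma gm_typ_len:
  assumes "gm_typ R k u v = Some t" shows "length u = k" "length v = k"
  using assms by (cases k; auto split: if_splits)+

lemma gm_typ_split:
  assumes irr: "\<forall>x. (x,x) \<notin> Edg R"
  shows "gm_typ R (m+n) u v = Some t \<Longrightarrow> take m u \<noteq> take m v \<Longrightarrow>
    gm_typ R m (take m u) (take m v) = Some t \<and> (\<forall>i. m \<le> i \<and> i < m+n \<longrightarrow> (u!i, v!i) \<in> Glue R t)"
proof (induction n arbitrary: u v t)
  case 0
  then have "length u = m" "length v = m" using gm_typ_len by auto
  moreover have "\<forall>i. m \<le> i \<and> i < m+0 \<longrightarrow> (u!i, v!i) \<in> Glue R t" by (intro allI impI) linarith
  ultimately show ?case using 0 by simp
next
  case (Suc n)
  have lu: "length u = Suc (m+n)" "length v = Suc (m+n)" using gm_typ_len[OF Suc.prems(1)] by simp_all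
  have ne: "take (m+n) u \<noteq> take (m+n) v"
  proof
    assume "take (m+n) u = take (m+n) v"
    then have "take m (take (m+n) u) = take m (take (m+n) v)" by simp
    then show False using Suc.prems(2) by (simp add: min_def)
  qed
  then have g: "gm_typ R (m+n) (take (m+n) u) (take (m+n) v) = Some t" and gl: "(last u, last v) \<in> Glue R t"
    using Suc.prems(1) lu by (auto split: if_splits option.splits)
  have tt: "take m (take (m+n) u) = take m u" "take m (take (m+n) v) = take m v" by (simp_all add: min_def)
  from Suc.IH[OF g] tt Suc.prems(2) have
    A: "gm_typ R m (take m u) (take m v) = Some t" and
    B: "\<forall>i. m \<le> i \<and> i < m+n \<longrightarrow> (take (m+n) u ! i, take (m+n) v ! i) \<in> Glue R t" by auto
  have l1: "last u = u ! (m+n)" using lu last_conv_nth[of u] by (metis Zero_not_Suc diff_Suc_1 list.size(3))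
  have l2: "last v = v ! (m+n)" using lu last_conv_nth[of v] by (metis Zero_not_Suc diff_Suc_1 list.size(3))
  show ?case using A B gl lu l1 l2 by (auto simp: less_Suc_eq)
qed

definition EPn :: "('a,'t) igs \<Rightarrow> ('a \<Rightarrow> 'a) \<Rightarrow> bool" where
  "EPn R f \<longleftrightarrow> (\<forall>n x y. (x,y) \<in> gm_edges R n \<longrightarrow>
     map f x = map f y \<or> (map f x, map f y) \<in> gm_edges R n \<or> (map f y, map f x) \<in> gm_edges R n)"

lemma EPn_id: "EPn R id" by (auto simp: EPn_def)

lemma EPn_comp: "EPn R f \<Longrightarrow> EPn R g \<Longrightarrow> EPn R (f \<circ> g)"
  unfolding EPn_def
  by (metis (no_types, lifting) map_map)

lemma igs_map_lift:
  assumes irr: "\<forall>x. (x,x) \<notin> Edg R" and im: "igs_mapping R R \<phi>"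
  shows "gm_typ R n x y = Some t \<Longrightarrow>
    (map \<phi> x = map \<phi> y \<and> (\<forall>(a,b)\<in>Glue R t. \<phi> a = \<phi> b)) \<or>
    (\<exists>t'. gm_typ R n (map \<phi> x) (map \<phi> y) = Some t' \<and> (\<forall>(a,b)\<in>Glue R t. (\<phi> a, \<phi> b) \<in> Glue R t')) \<or>
    (\<exists>t'. gm_typ R n (map \<phi> y) (map \<phi> x) = Some t' \<and> (\<forall>(a,b)\<in>Glue R t. (\<phi> b, \<phi> a) \<in> Glue R t'))"
proof (induction n arbitrary: x y t)
  case 0 then show ?case by simp
next
  case (Suc n)
  have lu: "length x = Suc n" "length y = Suc n" using gm_typ_len[OF Suc.prems] by simp_all
  have ne0: "x \<noteq> []" "y \<noteq> []" using lu by auto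
  have bt: "butlast x = take n x" "butlast y = take n y" using lu by (simp_all add: butlast_conv_take)
  have dx: "x = take n x @ [last x]" "y = take n y @ [last y]"
    using append_butlast_last_id[OF ne0(1)] append_butlast_last_id[OF ne0(2)] bt by simp_all
  have mx: "map \<phi> x = map \<phi> (take n x) @ [\<phi> (last x)]" "map \<phi> y = map \<phi> (take n y) @ [\<phi> (last y)]"
    using arg_cong[OF dx(1), of "map \<phi>"] arg_cong[OF dx(2), of "map \<phi>"] by simp_all
  have tmx: "take n (map \<phi> x) = map \<phi> (take n x)" "take n (map \<phi> y) = map \<phi> (take n y)"
    by (simp_all add: take_map)
  have lmx: "last (map \<phi> x) = \<phi> (last x)" "last (map \<phi> y) = \<phi> (last y)"
    using ne0 by (simp_all add: last_map)
  have irr2: "\<And>z. gm_typ R n z z = None" using gm_typ_irrefl[OF irr] .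
  show ?case
  proof (cases "take n x = take n y \<and> (last x, last y) \<in> Edg R")
    case True
    then have t: "t = Typing R (last x, last y)" using Suc.prems lu by auto
    from im True have gmap: "\<phi> (last x) = \<phi> (last y) \<or> (\<phi> (last x), \<phi> (last y)) \<in> Edg R \<or> (\<phi> (last y), \<phi> (last x)) \<in> Edg R"
      unfolding igs_mapping_def graph_mapping_def by blast
    then show ?thesis
    proof (elim disjE)
      assume e: "\<phi> (last x) = \<phi> (last y)"
      then have "map \<phi> x = map \<phi> y" using mx True by simp
      moreover have "\<forall>(a,b)\<in>Glue R t. \<phi> a = \<phi> b" using im True e t unfolding igs_mapping_def by blast
      ultimately show ?thesis by blast
    next
      assume e: "(\<phi> (last x), \<phi> (last y)) \<in> Edg R"
      then have "gm_typ R (Suc n) (map \<phi> x) (map \<phi> y) = Some (Typing R (\<phi> (last x), \<phi> (last y)))"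
        using lu tmx lmx True by simp
      moreover have "\<forall>(a,b)\<in>Glue R t. (\<phi> a, \<phi> b) \<in> Glue R (Typing R (\<phi> (last x), \<phi> (last y)))"
        using im True e t unfolding igs_mapping_def by blast
      ultimately show ?thesis by blast
    next
      assume e: "(\<phi> (last y), \<phi> (last x)) \<in> Edg R"
      then have "gm_typ R (Suc n) (map \<phi> y) (map \<phi> x) = Some (Typing R (\<phi> (last y), \<phi> (last x)))"
        using lu tmx lmx True by simp
      moreover have "\<forall>(a,b)\<in>Glue R t. (\<phi> b, \<phi> a) \<in> Glue R (Typing R (\<phi> (last y), \<phi> (last x)))"
        using im True e t unfolding igs_mapping_def by blast
      ultimately show ?thesis by blast
    qed
  next
    case False
    have eq: "gm_typ R (Suc n) x y = (case gm_typ R n (take n x) (take n y) of None \<Rightarrow> None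
        | Some t \<Rightarrow> if (last x, last y) \<in> Glue R t then Some t else None)"
      using lu False by (simp only: gm_typ.simps(2) if_not_P[OF False] lu simp_thms if_False)
    obtain t0 where t0: "gm_typ R n (take n x) (take n y) = Some t0"
      using Suc.prems eq by (cases "gm_typ R n (take n x) (take n y)") auto
    have gl0: "(last x, last y) \<in> Glue R t0" and tt: "t0 = t"
      using Suc.prems eq t0 by (simp_all split: if_splits)
    have g: "gm_typ R n (take n x) (take n y) = Some t" using t0 tt by simp
    have gl: "(last x, last y) \<in> Glue R t" using gl0 tt by simp
    from Suc.IH[OF g] show ?thesis
    proof (elim disjE exE conjE)
      assume h: "map \<phi> (take n x) = map \<phi> (take n y)" "\<forall>(a,b)\<in>Glue R t. \<phi> a = \<phi> b"
      have "\<phi> (last x) = \<phi> (last y)" using h(2) gl by blast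
      then have "map \<phi> x = map \<phi> y" using mx h(1) by simp
      then show ?thesis using h(2) by blast
    next
      fix t' assume A: "gm_typ R n (map \<phi> (take n x)) (map \<phi> (take n y)) = Some t'"
        and B: "\<forall>(a,b)\<in>Glue R t. (\<phi> a, \<phi> b) \<in> Glue R t'"
      have ne1: "map \<phi> (take n x) \<noteq> map \<phi> (take n y)" using A irr2 by (metis option.distinct(1))
      have gl1: "(\<phi> (last x), \<phi> (last y)) \<in> Glue R t'" using B gl by blast
      have "gm_typ R (Suc n) (map \<phi> x) (map \<phi> y) = Some t'"
        using ne1 gl1 A by (simp add: lu tmx lmx)
      then show ?thesis using B by blast
    next
      fix t' assume A: "gm_typ R n (map \<phi> (take n y)) (map \<phi> (take n x)) = Some t'"
        and B: "\<forall>(a,b)\<in>Glue R t. (\<phi> b, \<phi> a) \<in> Glue R t'"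
      have ne1: "map \<phi> (take n y) \<noteq> map \<phi> (take n x)" using A irr2 by (metis option.distinct(1))
      have gl1: "(\<phi> (last y), \<phi> (last x)) \<in> Glue R t'" using B gl by blast
      have "gm_typ R (Suc n) (map \<phi> y) (map \<phi> x) = Some t'"
        using ne1 gl1 A by (simp add: lu tmx lmx)
      then show ?thesis using B by blast
    qed
  qed
qed

lemma igs_map_EPn:
  assumes irr: "\<forall>x. (x,x) \<notin> Edg R" and im: "igs_mapping R R \<phi>"
  shows "EPn R \<phi>"
  unfolding EPn_def gm_edges_def
proof (intro allI impI)
  fix n x y assume "(x, y) \<in> {(w, v). gm_typ R n w v \<noteq> None}"
  then obtain t where "gm_typ R n x y = Some t" by auto
  from igs_map_lift[OF irr im this] show "map \<phi> x = map \<phi> y \<or>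
    (map \<phi> x, map \<phi> y) \<in> {(w, v). gm_typ R n w v \<noteq> None} \<or>
    (map \<phi> y, map \<phi> x) \<in> {(w, v). gm_typ R n w v \<noteq> None}" by auto
qed



lemma cub_wf: "cubical_igs d L s R \<Longrightarrow> igs_wf R"
  unfolding cubical_igs_def by (elim conjE) assumption
lemma cub_sub: "cubical_igs d L s R \<Longrightarrow> sub_system R (cube_igs d L s)"
  unfolding cubical_igs_def by (elim conjE) assumption
lemma cub_iso: "cubical_igs d L s R \<Longrightarrow> \<alpha> \<in> cube_group d L \<Longrightarrow> igs_iso R R \<alpha>"
  unfolding cubical_igs_def by (elim conjE) blast

definition idx :: "nat \<Rightarrow> nat \<Rightarrow> csym list \<Rightarrow> nat" where
  "idx L j p = foldl (\<lambda>acc a. acc * L + (fst a ! j - 1)) 0 p"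

lemma idx_snoc: "idx L j (p @ [a]) = idx L j p * L + (fst a ! j - 1)"
  by (simp add: idx_def)

lemma cube_typing:
  assumes "j < d" "\<forall>i<d. i \<noteq> j \<longrightarrow> fst b ! i = fst a ! i" "fst b ! j = fst a ! j + 1"
  shows "Typing (cube_igs d L s) (a,b) = j"
  unfolding cube_igs_def
  apply simp
  apply (rule the_equality)
  using assms by auto

lemma idx_step:
  assumes wf: "igs_wf R" and sub: "sub_system R (cube_igs d L s)" and L1: "L \<ge> 1"
  shows "gm_typ R m p q = Some t \<Longrightarrow> \<exists>j<d. (\<forall>i<d. i \<noteq> j \<longrightarrow> idx L i q = idx L i p) \<and>
     ((idx L j q = Suc (idx L j p) \<and> Glue R t \<subseteq> Glue (cube_igs d L s) j) \<or>
      (idx L j p = Suc (idx L j q) \<and> Glue R t \<subseteq> (Glue (cube_igs d L s) j)\<inverse>))"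
proof (induction m arbitrary: p q t)
  case 0 then show ?case by simp
next
  case (Suc m)
  have lu: "length p = Suc m" "length q = Suc m" using gm_typ_len[OF Suc.prems] by simp_all
  have ne0: "p \<noteq> []" "q \<noteq> []" using lu by auto
  have bt: "butlast p = take m p" "butlast q = take m q" using lu by (simp_all add: butlast_conv_take)
  have dx: "p = take m p @ [last p]" "q = take m q @ [last q]"
    using append_butlast_last_id[OF ne0(1)] append_butlast_last_id[OF ne0(2)] bt by simp_all
  have ip: "\<And>i. idx L i p = idx L i (take m p) * L + (fst (last p) ! i - 1)"
    using dx(1) idx_snoc by metis
  have iq: "\<And>i. idx L i q = idx L i (take m q) * L + (fst (last q) ! i - 1)"
    using dx(2) idx_snoc by metis
  let ?C = "cube_igs d L s"
  show ?case
  proof (cases "take m p = take m q \<and> (last p, last q) \<in> Edg R")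
    case True
    have eqT: "gm_typ R (Suc m) p q = Some (Typing R (last p, last q))"
      using lu True by (simp only: gm_typ.simps(2) if_P[OF True] lu simp_thms if_False if_True)
    then have t: "t = Typing R (last p, last q)" using Suc.prems by simp
    have irr: "\<forall>x. (x,x) \<notin> Edg R" using wf_irr[OF wf] .
    have ne: "last p \<noteq> last q" using True irr by metis
    have gmR: "\<forall>(x,y)\<in>Edg R. x = y \<or> (x,y) \<in> Edg ?C \<or> (y,x) \<in> Edg ?C"
      using sub unfolding sub_system_def igs_mapping_def graph_mapping_def by simp
    have cl2: "\<forall>(w1,v1)\<in>Edg R. (w1,v1) \<in> Edg ?C \<longrightarrow> (\<forall>(w2,v2)\<in>Glue R (Typing R (w1,v1)). (w2,v2) \<in> Glue ?C (Typing ?C (w1,v1)))"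
      using sub unfolding sub_system_def igs_mapping_def by simp
    have cl3: "\<forall>(w1,v1)\<in>Edg R. (v1,w1) \<in> Edg ?C \<longrightarrow> (\<forall>(w2,v2)\<in>Glue R (Typing R (w1,v1)). (v2,w2) \<in> Glue ?C (Typing ?C (v1,w1)))"
      using sub unfolding sub_system_def igs_mapping_def by simp
    have gm: "(last p, last q) \<in> Edg ?C \<or> (last q, last p) \<in> Edg ?C"
    proof -
      have ed: "(last p, last q) \<in> Edg R" using True by simp
      have "last p = last q \<or> (last p, last q) \<in> Edg ?C \<or> (last q, last p) \<in> Edg ?C"
        using bspec[OF gmR ed] by simp
      then show ?thesis using ne by simp
    qed
    then show ?thesis
    proof
      assume e: "(last p, last q) \<in> Edg ?C"
      then obtain j where j: "j < d" "\<forall>i<d. i \<noteq> j \<longrightarrow> fst (last q) ! i = fst (last p) ! i"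
        "fst (last q) ! j = fst (last p) ! j + 1" and cs: "last p \<in> cube_sym d L s"
        by (simp add: cube_igs_def) blast
      have pos: "fst (last p) ! j \<ge> 1" using cs j(1) by (simp add: cube_sym_def case_prod_beta)
      have ty: "Typing ?C (last p, last q) = j" using cube_typing[OF j] .
      have "Glue R t \<subseteq> Glue ?C j"
      proof
        fix z assume z: "z \<in> Glue R t"
        obtain z1 z2 where zz: "z = (z1,z2)" by (metis surj_pair)
        have "(z1,z2) \<in> Glue ?C (Typing ?C (last p, last q))"
          using cl2 True e z zz t by fast
        then show "z \<in> Glue ?C j" using ty zz by simp
      qed
      moreover have "\<forall>i<d. i \<noteq> j \<longrightarrow> idx L i q = idx L i p" using ip iq True j by simp
      moreover have "idx L j q = Suc (idx L j p)" using ip iq True j pos by simp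
      ultimately show ?thesis using j(1) by blast
    next
      assume e: "(last q, last p) \<in> Edg ?C"
      then obtain j where j: "j < d" "\<forall>i<d. i \<noteq> j \<longrightarrow> fst (last p) ! i = fst (last q) ! i"
        "fst (last p) ! j = fst (last q) ! j + 1" and cs: "last q \<in> cube_sym d L s"
        by (simp add: cube_igs_def) blast
      have pos: "fst (last q) ! j \<ge> 1" using cs j(1) by (simp add: cube_sym_def case_prod_beta)
      have ty: "Typing ?C (last q, last p) = j" using cube_typing[OF j] .
      have "Glue R t \<subseteq> (Glue ?C j)\<inverse>"
      proof
        fix z assume z: "z \<in> Glue R t"
        obtain z1 z2 where zz: "z = (z1,z2)" by (metis surj_pair)
        have "(z2,z1) \<in> Glue ?C (Typing ?C (last q, last p))"
          using cl3 True e z zz t by fast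
        then show "z \<in> (Glue ?C j)\<inverse>" using ty zz by simp
      qed
      moreover have "\<forall>i<d. i \<noteq> j \<longrightarrow> idx L i q = idx L i p" using ip iq True j by simp
      moreover have "idx L j p = Suc (idx L j q)" using ip iq True j pos by simp
      ultimately show ?thesis using j(1) by blast
    qed
  next
    case False
    have eq: "gm_typ R (Suc m) p q = (case gm_typ R m (take m p) (take m q) of None \<Rightarrow> None
        | Some t \<Rightarrow> if (last p, last q) \<in> Glue R t then Some t else None)"
      using lu False by (simp only: gm_typ.simps(2) if_not_P[OF False] lu simp_thms if_False)
    obtain t0 where t0: "gm_typ R m (take m p) (take m q) = Some t0"
      using Suc.prems eq by (cases "gm_typ R m (take m p) (take m q)") auto
    have gl0: "(last p, last q) \<in> Glue R t0" and tt: "t0 = t"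
      using Suc.prems eq t0 by (simp_all split: if_splits)
    have g: "gm_typ R m (take m p) (take m q) = Some t" using t0 tt by simp
    have gl: "(last p, last q) \<in> Glue R t" using gl0 tt by simp
    from Suc.IH[OF g] obtain j where j: "j < d"
      "\<forall>i<d. i \<noteq> j \<longrightarrow> idx L i (take m q) = idx L i (take m p)" and
      o: "(idx L j (take m q) = Suc (idx L j (take m p)) \<and> Glue R t \<subseteq> Glue ?C j) \<or>
      (idx L j (take m p) = Suc (idx L j (take m q)) \<and> Glue R t \<subseteq> (Glue ?C j)\<inverse>)" by blast
    from o show ?thesis
    proof
      assume A: "idx L j (take m q) = Suc (idx L j (take m p)) \<and> Glue R t \<subseteq> Glue ?C j"
      then have gc: "(last p, last q) \<in> Glue ?C j" using gl by auto
      then have c: "\<forall>i<d. i \<noteq> j \<longrightarrow> fst (last p) ! i = fst (last q) ! i" "fst (last p) ! j = L" "fst (last q) ! j = 1"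
        by (auto simp: cube_igs_def)
      have "\<forall>i<d. i \<noteq> j \<longrightarrow> idx L i q = idx L i p" using ip iq j c by simp
      moreover have "idx L j q = Suc (idx L j p)" using ip iq A c L1 by (simp add: algebra_simps)
      ultimately show ?thesis using j(1) A by blast
    next
      assume A: "idx L j (take m p) = Suc (idx L j (take m q)) \<and> Glue R t \<subseteq> (Glue ?C j)\<inverse>"
      then have gc: "(last q, last p) \<in> Glue ?C j" using gl by auto
      then have c: "\<forall>i<d. i \<noteq> j \<longrightarrow> fst (last q) ! i = fst (last p) ! i" "fst (last q) ! j = L" "fst (last p) ! j = 1"
        by (auto simp: cube_igs_def)
      have "\<forall>i<d. i \<noteq> j \<longrightarrow> idx L i q = idx L i p" using ip iq j c by simp
      moreover have "idx L j p = Suc (idx L j q)" using ip iq A c L1 by (simp add: algebra_simps)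
      ultimately show ?thesis using j(1) A by blast
    qed
  qed
qed



definition flipJ :: "nat \<Rightarrow> nat set \<Rightarrow> csym \<Rightarrow> csym" where
  "flipJ L A = (\<lambda>(c,\<sigma>). (map (\<lambda>i. if i \<in> A then L+1-c!i else c!i) [0..<length c], \<sigma>))"

lemma flipJ_empty: "flipJ L {} = id"
  by (auto simp: flipJ_def fun_eq_iff map_nth)

lemma flipJ_insert: "j \<notin> A \<Longrightarrow> flipJ L (insert j A) = eta_map L j \<circ> flipJ L A"
proof (rule ext)
  fix a :: csym assume jA: "j \<notin> A"
  obtain c \<sigma> where a: "a = (c,\<sigma>)" by (metis surj_pair)
  define f where "f = (\<lambda>i. if i \<in> A then L+1-c!i else c!i)"
  define g where "g = (\<lambda>i. if i \<in> insert j A then L+1-c!i else c!i)"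
  have "map g [0..<length c] = (map f [0..<length c])[j := L + 1 - (map f [0..<length c]) ! j]"
  proof (rule nth_equalityI)
    show "length (map g [0..<length c]) = length ((map f [0..<length c])[j := L + 1 - (map f [0..<length c]) ! j])"
      by simp
  next
    fix i assume "i < length (map g [0..<length c])"
    then have i: "i < length c" by simp
    show "map g [0..<length c] ! i = (map f [0..<length c])[j := L + 1 - (map f [0..<length c]) ! j] ! i"
      using i jA by (cases "i = j") (simp_all add: f_def g_def nth_list_update)
  qed
  then show "flipJ L (insert j A) a = (eta_map L j \<circ> flipJ L A) a"
    unfolding a flipJ_def eta_map_def f_def g_def by simp
qed

lemma flipJ_props:
  assumes cub: "cubical_igs d L s R"
  shows "finite A \<Longrightarrow> A \<subseteq> {..<d} \<Longrightarrow> EPn R (flipJ L A) \<and> flipJ L A ` Sym R \<subseteq> Sym R"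
proof (induction A rule: finite_induct)
  case empty
  have "EPn R (flipJ L {})" unfolding flipJ_empty by (rule EPn_id)
  moreover have "flipJ L {} ` Sym R \<subseteq> Sym R" by (simp add: flipJ_empty)
  ultimately show ?case by blast
next
  case (insert j A)
  have jd: "j < d" using insert by auto
  have "eta_map L j \<in> cube_group d L" using jd unfolding cube_group_def by blast
  then have iso: "igs_iso R R (eta_map L j)" using cub_iso[OF cub] by blast
  have irr: "\<forall>x. (x,x) \<notin> Edg R" using wf_irr[OF cub_wf[OF cub]] .
  have "igs_mapping R R (eta_map L j)" using iso unfolding igs_iso_def by (elim conjE)
  then have "EPn R (eta_map L j)" using igs_map_EPn[OF irr] by blast
  moreover have "eta_map L j ` Sym R \<subseteq> Sym R" using iso unfolding igs_iso_def bij_betw_def by (elim conjE) simp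
  moreover have ih: "EPn R (flipJ L A) \<and> flipJ L A ` Sym R \<subseteq> Sym R" using insert by blast
  ultimately have "EPn R (eta_map L j \<circ> flipJ L A)" "(eta_map L j \<circ> flipJ L A) ` Sym R \<subseteq> Sym R"
    using EPn_comp[of R "eta_map L j" "flipJ L A"] by (blast, metis image_comp image_mono order_trans)
  then show ?case unfolding flipJ_insert[OF insert(2), of L] by (rule conjI)
qed

lemma flip_glue:
  assumes g: "(a,b) \<in> Glue (cube_igs d L s) j" and jd: "j < d"
    and AB: "\<forall>i. i \<noteq> j \<longrightarrow> (i \<in> A \<longleftrightarrow> i \<in> B)" "j \<in> A \<longleftrightarrow> j \<notin> B"
  shows "flipJ L A a = flipJ L B b"
proof -
  obtain c \<sigma> where a: "a = (c,\<sigma>)" by (metis surj_pair)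
  obtain c' \<sigma>' where b: "b = (c',\<sigma>')" by (metis surj_pair)
  have g2: "(c,\<sigma>) \<in> cube_sym d L s \<and> (c',\<sigma>') \<in> cube_sym d L s \<and>
               (\<forall>i<d. i \<noteq> j \<longrightarrow> c ! i = c' ! i) \<and> c ! j = L \<and> c' ! j = 1 \<and> \<sigma> = \<sigma>'"
    using g unfolding a b cube_igs_def by (simp only: igs.select_convs mem_Collect_eq case_prod_conv fst_conv snd_conv) blast
  have c: "length c = d" "length c' = d" "\<forall>i<d. i \<noteq> j \<longrightarrow> c!i = c'!i" "c!j = L" "c'!j = 1" "\<sigma> = \<sigma>'"
    using g2 unfolding cube_sym_def by auto
  have "map (\<lambda>i. if i \<in> A then L+1-c!i else c!i) [0..<length c] = map (\<lambda>i. if i \<in> B then L+1-c'!i else c'!i) [0..<length c']"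
  proof (rule nth_equalityI)
    show "length (map (\<lambda>i. if i \<in> A then L+1-c!i else c!i) [0..<length c]) = length (map (\<lambda>i. if i \<in> B then L+1-c'!i else c'!i) [0..<length c'])"
      using c by simp
  next
    fix i assume "i < length (map (\<lambda>i. if i \<in> A then L+1-c!i else c!i) [0..<length c])"
    then have i: "i < d" using c by simp
    show "map (\<lambda>i. if i \<in> A then L+1-c!i else c!i) [0..<length c] ! i = map (\<lambda>i. if i \<in> B then L+1-c'!i else c'!i) [0..<length c'] ! i"
    proof (cases "i = j")
      case True then show ?thesis using i c AB by auto
    next
      case False then show ?thesis using i c AB by auto
    qed
  qed
  then show ?thesis unfolding a b flipJ_def using c(6) by simp
qed

lemma gm_typ_sym:
  assumes wf: "igs_wf R"
  shows "gm_typ R k u v = Some t \<Longrightarrow> t \<in> Typ R \<and> (set u \<subseteq> Sym R \<longleftrightarrow> set v \<subseteq> Sym R)"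
proof (induction k arbitrary: u v t)
  case 0 then show ?case by simp
next
  case (Suc n)
  have lu: "length u = Suc n" "length v = Suc n" using gm_typ_len[OF Suc.prems] by simp_all
  have ne0: "u \<noteq> []" "v \<noteq> []" using lu by auto
  have bt: "butlast u = take n u" "butlast v = take n v" using lu by (simp_all add: butlast_conv_take)
  have dx: "u = take n u @ [last u]" "v = take n v @ [last v]"
    using append_butlast_last_id[OF ne0(1)] append_butlast_last_id[OF ne0(2)] bt by simp_all
  have su: "(set u \<subseteq> Sym R) = (set (take n u) \<subseteq> Sym R \<and> last u \<in> Sym R)"
    using dx(1) by (metis Un_subset_iff empty_set empty_subsetI insert_subset list.simps(15) set_append)
  have sv: "(set v \<subseteq> Sym R) = (set (take n v) \<subseteq> Sym R \<and> last v \<in> Sym R)"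
    using dx(2) by (metis Un_subset_iff empty_set empty_subsetI insert_subset list.simps(15) set_append)
  have ES: "Edg R \<subseteq> Sym R \<times> Sym R" using wf unfolding igs_wf_def by (elim conjE) assumption
  have TT: "Typing R ` Edg R = Typ R" using wf unfolding igs_wf_def by (elim conjE) assumption
  have GS: "\<forall>t\<in>Typ R. Glue R t \<noteq> {} \<and> Glue R t \<subseteq> Sym R \<times> Sym R"
    using wf unfolding igs_wf_def by (elim conjE) assumption
  show ?case
  proof (cases "take n u = take n v \<and> (last u, last v) \<in> Edg R")
    case True
    have eqT: "gm_typ R (Suc n) u v = Some (Typing R (last u, last v))"
      using lu True by (simp only: gm_typ.simps(2) if_P[OF True] lu simp_thms if_False if_True)
    then have t: "t = Typing R (last u, last v)" using Suc.prems by simp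
    have "t \<in> Typ R" using t True TT by blast
    moreover have "last u \<in> Sym R" "last v \<in> Sym R" using True ES by blast+
    ultimately show ?thesis using su sv True by simp
  next
    case False
    have eq: "gm_typ R (Suc n) u v = (case gm_typ R n (take n u) (take n v) of None \<Rightarrow> None
        | Some t \<Rightarrow> if (last u, last v) \<in> Glue R t then Some t else None)"
      using lu False by (simp only: gm_typ.simps(2) if_not_P[OF False] lu simp_thms if_False)
    obtain t0 where t0: "gm_typ R n (take n u) (take n v) = Some t0"
      using Suc.prems eq by (cases "gm_typ R n (take n u) (take n v)") auto
    have gl0: "(last u, last v) \<in> Glue R t0" and tt: "t0 = t"
      using Suc.prems eq t0 by (simp_all split: if_splits)
    have ih: "t0 \<in> Typ R \<and> (set (take n u) \<subseteq> Sym R \<longleftrightarrow> set (take n v) \<subseteq> Sym R)"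
      using Suc.IH[OF t0] .
    then have "last u \<in> Sym R" "last v \<in> Sym R" using GS gl0 by blast+
    then show ?thesis using su sv ih tt by simp
  qed
qed



theorem proposition4p5:
  fixes d L s n :: nat and R :: "(csym, nat) igs" and w :: "csym list"
  assumes "d \<ge> 1" and "s \<ge> 1" and "L \<ge> 3"
    and "cubical_igs d L s R"
    and "w \<in> words_all R"
  shows "\<exists>\<phi>. folding (words R (n + length w)) (gm_edges R (n + length w))
                    {w @ u | u. u \<in> words R n} \<phi>"
proof -
  note cub = assms(4)
  define m where "m = length w"
  have wW: "w \<in> words R m" using assms(5) unfolding words_all_def words_def m_def by auto
  have wf: "igs_wf R" using cub_wf[OF cub] .
  have sub: "sub_system R (cube_igs d L s)" using cub_sub[OF cub] .
  have irr: "\<forall>x. (x,x) \<notin> Edg R" using wf_irr[OF wf] .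
  have L1: "L \<ge> 1" using assms(3) by simp
  define J where "J p = {i. i < d \<and> odd (idx L i p) \<noteq> odd (idx L i w)}" for p
  define \<phi> where "\<phi> u = (if u \<in> words R (n+m) then w @ map (flipJ L (J (take m u))) (drop m u) else undefined)" for u
  have JP: "EPn R (flipJ L (J p)) \<and> flipJ L (J p) ` Sym R \<subseteq> Sym R" for p
    by (rule flipJ_props[OF cub]) (auto simp: J_def)
  have Jw: "J w = {}" by (auto simp: J_def)
  let ?U = "{w @ u | u. u \<in> words R n}"
  let ?V = "words R (n + m)"
  let ?E = "gm_edges R (n + m)"
  have UV: "?U \<subseteq> ?V" using wW by (auto simp: words_def)
  have fixU: "\<forall>x\<in>?U. \<phi> x = x"
  proof
    fix x assume "x \<in> ?U"
    then obtain u where u: "x = w @ u" by blast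
    have "take m x = w" "drop m x = u" using u m_def by simp_all
    moreover have "x \<in> ?V" using UV \<open>x \<in> ?U\<close> by blast
    ultimately show "\<phi> x = x" using u Jw by (simp add: \<phi>_def flipJ_empty)
  qed
  have img: "\<phi> u \<in> ?U" if u: "u \<in> ?V" for u
  proof -
    have "set (drop m u) \<subseteq> Sym R" using u by (auto simp: words_def dest!: in_set_dropD)
    then have "set (map (flipJ L (J (take m u))) (drop m u)) \<subseteq> Sym R"
      using JP[of "take m u"] by auto
    moreover have "length (map (flipJ L (J (take m u))) (drop m u)) = n" using u by (simp add: words_def)
    ultimately have "map (flipJ L (J (take m u))) (drop m u) \<in> words R n" by (simp add: words_def)
    then show "\<phi> u \<in> ?U" using u by (auto simp: \<phi>_def)
  qed
  have edges: "\<phi> u = \<phi> v \<or> (\<phi> u, \<phi> v) \<in> ?E \<inter> ?U \<times> ?U \<or> (\<phi> v, \<phi> u) \<in> ?E \<inter> ?U \<times> ?U"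
    if uv: "(u,v) \<in> ?E" for u v
  proof -
    obtain t where t: "gm_typ R (m+n) u v = Some t" using uv by (auto simp: gm_edges_def add.commute)
    have lu: "length u = m+n" "length v = m+n" using gm_typ_len[OF t] by simp_all
    have lu': "length u = n+m" "length v = n+m" using lu by simp_all
    have ss: "set u \<subseteq> Sym R \<longleftrightarrow> set v \<subseteq> Sym R" using gm_typ_sym[OF wf t] by blast
    show ?thesis
    proof (cases "u \<in> ?V")
      case False
      then have "v \<notin> ?V" using ss lu' by (simp add: words_def)
      then have "\<phi> u = \<phi> v" using False by (simp add: \<phi>_def)
      then show ?thesis by blast
    next
      case True
    have uvV: "u \<in> ?V" "v \<in> ?V" using True ss lu' by (simp_all add: words_def)
    have uU: "\<phi> u \<in> ?U" "\<phi> v \<in> ?U" using img uvV by auto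
    show ?thesis
    proof (cases "take m u = take m v")
      case True
      define p where "p = take m u"
      define F where "F = flipJ L (J p)"
      have lp: "length p = m" using lu p_def by simp
      have ux: "u = p @ drop m u" "v = p @ drop m v" using True p_def by (metis append_take_drop_id)+
      have "gm_typ R n (drop m u) (drop m v) = Some t"
        using t gm_typ_append[OF irr lp, of n "drop m u" "drop m v"] ux by simp
      then have ed: "(drop m u, drop m v) \<in> gm_edges R n" by (simp add: gm_edges_def)
      have pu: "\<phi> u = w @ map F (drop m u)" "\<phi> v = w @ map F (drop m v)"
        using True uvV by (simp_all add: \<phi>_def F_def p_def)
      have lw: "length w = m" using m_def by simp
      have ap: "(w @ a, w @ b) \<in> ?E" if "(a,b) \<in> gm_edges R n" for a b
        using that gm_typ_append[OF irr lw, of n a b] by (simp add: gm_edges_def add.commute)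
      from JP[of p] ed have "map F (drop m u) = map F (drop m v) \<or> (map F (drop m u), map F (drop m v)) \<in> gm_edges R n
          \<or> (map F (drop m v), map F (drop m u)) \<in> gm_edges R n"
        unfolding EPn_def F_def by blast
      then show ?thesis using pu ap uU by auto
    next
      case False
      define p where "p = take m u"
      define q where "q = take m v"
      from gm_typ_split[OF irr t False] have g: "gm_typ R m p q = Some t"
        and gl: "\<forall>i. m \<le> i \<and> i < m+n \<longrightarrow> (u!i, v!i) \<in> Glue R t" by (auto simp: p_def q_def)
      from idx_step[OF wf sub L1 g] obtain j where j: "j < d"
        "\<forall>i<d. i \<noteq> j \<longrightarrow> idx L i q = idx L i p" and
        o: "(idx L j q = Suc (idx L j p) \<and> Glue R t \<subseteq> Glue (cube_igs d L s) j) \<or>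
            (idx L j p = Suc (idx L j q) \<and> Glue R t \<subseteq> (Glue (cube_igs d L s) j)\<inverse>)" by blast
      have AB1: "\<forall>i. i \<noteq> j \<longrightarrow> (i \<in> J p \<longleftrightarrow> i \<in> J q)" using j by (auto simp: J_def)
      have AB2: "j \<in> J p \<longleftrightarrow> j \<notin> J q" using o j(1) by (auto simp: J_def)
      have "map (flipJ L (J p)) (drop m u) = map (flipJ L (J q)) (drop m v)"
      proof (rule nth_equalityI)
        show "length (map (flipJ L (J p)) (drop m u)) = length (map (flipJ L (J q)) (drop m v))"
          using lu by simp
      next
        fix k assume "k < length (map (flipJ L (J p)) (drop m u))"
        then have k: "k < n" using lu by simp
        have gk: "(u!(m+k), v!(m+k)) \<in> Glue R t" using gl k by simp
        have "flipJ L (J p) (u!(m+k)) = flipJ L (J q) (v!(m+k))"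
          using o
        proof
          assume "idx L j q = Suc (idx L j p) \<and> Glue R t \<subseteq> Glue (cube_igs d L s) j"
          then have "(u!(m+k), v!(m+k)) \<in> Glue (cube_igs d L s) j" using gk by blast
          then show ?thesis using flip_glue[OF _ j(1) AB1 AB2] by blast
        next
          assume "idx L j p = Suc (idx L j q) \<and> Glue R t \<subseteq> (Glue (cube_igs d L s) j)\<inverse>"
          then have "(v!(m+k), u!(m+k)) \<in> Glue (cube_igs d L s) j" using gk by blast
          moreover have "\<forall>i. i \<noteq> j \<longrightarrow> (i \<in> J q \<longleftrightarrow> i \<in> J p)" "j \<in> J q \<longleftrightarrow> j \<notin> J p"
            using AB1 AB2 by blast+
          ultimately show ?thesis using flip_glue[OF _ j(1)] by metis
        qed
        then show "map (flipJ L (J p)) (drop m u) ! k = map (flipJ L (J q)) (drop m v) ! k"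
          using k lu by simp
      qed
      then have "\<phi> u = \<phi> v" using uvV by (simp add: \<phi>_def p_def q_def)
      then show ?thesis by blast
    qed
    qed
  qed
  have "folding ?V ?E ?U \<phi>"
    unfolding folding_def graph_mapping_def
  proof (intro conjI)
    show "?U \<subseteq> ?V" by (rule UV)
    show "\<phi> ` ?V \<subseteq> ?U" using img by blast
    show "\<forall>(x, y)\<in>?E. \<phi> x = \<phi> y \<or> (\<phi> x, \<phi> y) \<in> ?E \<inter> ?U \<times> ?U \<or> (\<phi> y, \<phi> x) \<in> ?E \<inter> ?U \<times> ?U"
      using edges by blast
    show "\<forall>x\<in>?U. \<phi> x = x" by (rule fixU)
  qed
  then show ?thesis unfolding m_def by blast
qed


end
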